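(* Let $(D_d)_{d\in\mathbb N}$ be a sequence of convex sets satisfying Property (P), let $L_{0,d},L_{1,d}>0$ with $\lim_{d\to\infty}L_{1,d}\,d=0$, and let \[ C_d^1(L)=\{f\in C^1(D_d)\mid\|f\|_\infty\le1,\ \operatorname{Lip}(f)\le L_{0,d},\ \operatorname{Lip}(\nabla f)\le L_{1,d}\},\qquad F_d^2=\{f\in C^1(D_d)\mid\|f\|_\infty\le1,\ \operatorname{Lip}(\nabla f)\le L_{1,d}\}. \] Then for every $\varepsilon\in(0,1)$, $n(\varepsilon,C_d^1(L))=n(\varepsilon,F_d^2)=1$ for all $d\ge d(\varepsilon)$ large enough.
   Context: Property (P): $D_d\subset\mathbb R^d$ open with $\lambda_d(D_d)=1$ and there exist $x_d^*\in D_d$ and $R<\infty$ with $\lim_{d\to\infty}\lambda_d(\{x\in D_d\mid\|x-x_d^*\|_2\ge R\sqrt d\})=0$. Lipschitz constants are w.r.t. Euclidean norms. $n(\varepsilon,F_d)$: minimal number $n\ge0$ of (possibly adaptive) function values such that some algorithm $\phi(f(x_1),\dots,f(x_n))$ has worst-case error $\sup_{f\in F_d}|\int_{D_d}f-\phi(\dots)|\le\varepsilon$. *)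

theory Defs
  imports "HOL-Probability.Probability"
begin

text \<open>Euclidean space R^d is modelled as the extensional functions
  PiE {..<d} (\<lambda>_. UNIV) of type nat \<Rightarrow> real (coordinates 0..d-1),
  with the product Lebesgue(-Borel) measure.\<close>

definition Rd :: "nat \<Rightarrow> (nat \<Rightarrow> real) set" where
  "Rd d = PiE {..<d} (\<lambda>_. UNIV)"

definition lebd :: "nat \<Rightarrow> (nat \<Rightarrow> real) measure" where
  "lebd d = PiM {..<d} (\<lambda>_. lborel)"

definition distd :: "nat \<Rightarrow> (nat \<Rightarrow> real) \<Rightarrow> (nat \<Rightarrow> real) \<Rightarrow> real" where
  "distd d x y = sqrt (\<Sum>i<d. (x i - y i)^2)"

definition innerd :: "nat \<Rightarrow> (nat \<Rightarrow> real) \<Rightarrow> (nat \<Rightarrow> real) \<Rightarrow> real" where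
  "innerd d x y = (\<Sum>i<d. x i * y i)"

definition open_d :: "nat \<Rightarrow> (nat \<Rightarrow> real) set \<Rightarrow> bool" where
  "open_d d D \<longleftrightarrow> D \<subseteq> Rd d \<and>
     (\<forall>x\<in>D. \<exists>e>0. \<forall>y\<in>Rd d. distd d x y < e \<longrightarrow> y \<in> D)"

definition convex_d :: "nat \<Rightarrow> (nat \<Rightarrow> real) set \<Rightarrow> bool" where
  "convex_d d D \<longleftrightarrow> (\<forall>x\<in>D. \<forall>y\<in>D. \<forall>t::real. 0 \<le> t \<and> t \<le> 1 \<longrightarrow>
      restrict (\<lambda>i. (1 - t) * x i + t * y i) {..<d} \<in> D)"

definition property_P :: "(nat \<Rightarrow> (nat \<Rightarrow> real) set) \<Rightarrow> bool" where
  "property_P D \<longleftrightarrow>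
     (\<forall>d\<ge>1. open_d d (D d) \<and> emeasure (lebd d) (D d) = 1) \<and>
     (\<exists>xs. \<exists>R::real. (\<forall>d\<ge>1. xs d \<in> D d) \<and>
        (\<lambda>d. measure (lebd d) {x \<in> D d. distd d x (xs d) \<ge> R * sqrt (real d)})
          \<longlonglongrightarrow> 0)"

definition is_grad_on :: "nat \<Rightarrow> (nat \<Rightarrow> real) set \<Rightarrow> ((nat \<Rightarrow> real) \<Rightarrow> real)
    \<Rightarrow> ((nat \<Rightarrow> real) \<Rightarrow> (nat \<Rightarrow> real)) \<Rightarrow> bool" where
  "is_grad_on d D f g \<longleftrightarrow> (\<forall>x\<in>D. g x \<in> Rd d \<and>
     (\<forall>e>0. \<exists>\<delta>>0. \<forall>y\<in>D. distd d y x < \<delta> \<longrightarrow>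
        \<bar>f y - f x - innerd d (g x) (\<lambda>i. y i - x i)\<bar> \<le> e * distd d y x))"

definition cont_on_d :: "nat \<Rightarrow> (nat \<Rightarrow> real) set \<Rightarrow> ((nat \<Rightarrow> real) \<Rightarrow> (nat \<Rightarrow> real)) \<Rightarrow> bool" where
  "cont_on_d d D g \<longleftrightarrow> (\<forall>x\<in>D. \<forall>e>0. \<exists>\<delta>>0. \<forall>y\<in>D.
      distd d y x < \<delta> \<longrightarrow> distd d (g y) (g x) < e)"

definition lip_d :: "nat \<Rightarrow> (nat \<Rightarrow> real) set \<Rightarrow> ((nat \<Rightarrow> real) \<Rightarrow> real) \<Rightarrow> real \<Rightarrow> bool" where
  "lip_d d D f L \<longleftrightarrow> (\<forall>x\<in>D. \<forall>y\<in>D. \<bar>f x - f y\<bar> \<le> L * distd d x y)"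

definition lip_grad_d :: "nat \<Rightarrow> (nat \<Rightarrow> real) set \<Rightarrow> ((nat \<Rightarrow> real) \<Rightarrow> (nat \<Rightarrow> real)) \<Rightarrow> real \<Rightarrow> bool" where
  "lip_grad_d d D g L \<longleftrightarrow> (\<forall>x\<in>D. \<forall>y\<in>D. distd d (g x) (g y) \<le> L * distd d x y)"

definition sup_le1 :: "(nat \<Rightarrow> real) set \<Rightarrow> ((nat \<Rightarrow> real) \<Rightarrow> real) \<Rightarrow> bool" where
  "sup_le1 D f \<longleftrightarrow> (\<forall>x\<in>D. \<bar>f x\<bar> \<le> 1)"

definition C1L :: "nat \<Rightarrow> (nat \<Rightarrow> real) set \<Rightarrow> real \<Rightarrow> real \<Rightarrow> ((nat \<Rightarrow> real) \<Rightarrow> real) set" where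
  "C1L d D L0 L1 = {f. sup_le1 D f \<and> lip_d d D f L0 \<and>
      (\<exists>g. is_grad_on d D f g \<and> cont_on_d d D g \<and> lip_grad_d d D g L1)}"

definition F2 :: "nat \<Rightarrow> (nat \<Rightarrow> real) set \<Rightarrow> real \<Rightarrow> ((nat \<Rightarrow> real) \<Rightarrow> real) set" where
  "F2 d D L1 = {f. sup_le1 D f \<and>
      (\<exists>g. is_grad_on d D f g \<and> cont_on_d d D g \<and> lip_grad_d d D g L1)}"

fun info :: "(nat \<Rightarrow> real list \<Rightarrow> 'a) \<Rightarrow> ('a \<Rightarrow> real) \<Rightarrow> nat \<Rightarrow> real list" where
  "info P f 0 = []"
| "info P f (Suc k) = info P f k @ [f (P k (info P f k))]"

definition achieves :: "nat \<Rightarrow> (nat \<Rightarrow> real) set \<Rightarrow> ((nat \<Rightarrow> real) \<Rightarrow> real) set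
    \<Rightarrow> nat \<Rightarrow> real \<Rightarrow> bool" where
  "achieves d D F n \<epsilon> \<longleftrightarrow> (\<exists>(P :: nat \<Rightarrow> real list \<Rightarrow> (nat \<Rightarrow> real)) (\<phi> :: real list \<Rightarrow> real).
      (\<forall>k ys. P k ys \<in> D) \<and>
      (\<forall>f\<in>F. \<bar>(LINT x:D|lebd d. f x) - \<phi> (info P f n)\<bar> \<le> \<epsilon>))"

definition n_compl :: "nat \<Rightarrow> (nat \<Rightarrow> real) set \<Rightarrow> ((nat \<Rightarrow> real) \<Rightarrow> real) set \<Rightarrow> real \<Rightarrow> nat" where
  "n_compl d D F \<epsilon> = (LEAST n. achieves d D F n \<epsilon>)"

end

theory Submission
  imports Defs
begin


lemma distd_L2: "distd d x y = L2_set (\<lambda>i. x i - y i) {..<d}"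
  by (simp add: distd_def L2_set_def)

lemma distd_nonneg: "0 \<le> distd d x y"
  by (simp add: distd_def sum_nonneg)

lemma distd_sym: "distd d x y = distd d y x"
  unfolding distd_def by (simp add: power2_commute)

lemma distd_triangle: "distd d x z \<le> distd d x y + distd d y z"
proof -
  have "distd d x z = L2_set (\<lambda>i. (x i - y i) + (y i - z i)) {..<d}"
    by (simp add: distd_L2)
  also have "\<dots> \<le> distd d x y + distd d y z"
    unfolding distd_L2 by (rule L2_set_triangle_ineq)
  finally show ?thesis .
qed

lemma innerd_CS: "\<bar>innerd d u v\<bar> \<le> L2_set u {..<d} * L2_set v {..<d}"
proof -
  have "\<bar>innerd d u v\<bar> \<le> (\<Sum>i<d. \<bar>u i\<bar> * \<bar>v i\<bar>)"
    unfolding innerd_def by (rule order_trans[OF sum_abs]) (simp add: abs_mult)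
  also have "\<dots> \<le> L2_set u {..<d} * L2_set v {..<d}" by (rule L2_set_mult_ineq)
  finally show ?thesis .
qed

lemma innerd_dist: "\<bar>innerd d (\<lambda>i. a i - b i) (\<lambda>i. x i - y i)\<bar> \<le> distd d a b * distd d x y"
  using innerd_CS[of d "\<lambda>i. a i - b i" "\<lambda>i. x i - y i"] by (simp add: distd_L2)

lemma innerd_norm: "\<bar>innerd d u (\<lambda>i. x i - y i)\<bar> \<le> L2_set u {..<d} * distd d x y"
  using innerd_CS[of d u "\<lambda>i. x i - y i"] by (simp add: distd_L2)

lemma coord_le_distd: "i < d \<Longrightarrow> \<bar>x i - y i\<bar> \<le> distd d x y"
  unfolding distd_L2 using member_le_L2_set[of "{..<d}" i "\<lambda>i. \<bar>x i - y i\<bar>"]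
  by (simp add: L2_set_def)

lemma Rd_restrict: "x \<in> Rd d \<Longrightarrow> restrict x {..<d} = x"
  unfolding Rd_def by (simp add: extensional_restrict PiE_iff)

lemma restrict_in_Rd: "restrict f {..<d} \<in> Rd d"
  unfolding Rd_def by simp

lemma space_lebd: "space (lebd d) = Rd d"
  unfolding lebd_def Rd_def by (simp add: space_PiM)

lemma distd_seg:
  "distd d (restrict (\<lambda>i. (1 - t) * x i + t * y i) {..<d}) (restrict (\<lambda>i. (1 - s) * x i + s * y i) {..<d})
    = \<bar>t - s\<bar> * distd d y x"
proof -
  have "distd d (restrict (\<lambda>i. (1 - t) * x i + t * y i) {..<d}) (restrict (\<lambda>i. (1 - s) * x i + s * y i) {..<d})
     = L2_set (\<lambda>i. \<bar>t - s\<bar> * (y i - x i)) {..<d}"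
    unfolding distd_L2 L2_set_def
    by (intro arg_cong[where f=sqrt] sum.cong) (auto simp: power2_eq_square algebra_simps)
  also have "\<dots> = \<bar>t - s\<bar> * distd d y x"
    by (simp add: distd_L2 L2_set_right_distrib)
  finally show ?thesis .
qed



lemma innerd_diff: "innerd d a v - innerd d b v = innerd d (\<lambda>i. a i - b i) v"
  unfolding innerd_def by (simp add: sum_subtractf algebra_simps)

lemma innerd_scale: "innerd d a (\<lambda>i. c * v i) = c * innerd d a v"
  unfolding innerd_def by (simp add: sum_distrib_left algebra_simps)

lemma taylor:
  assumes cv: "convex_d d D" and sub: "D \<subseteq> Rd d"
    and gr: "is_grad_on d D f g" and lip: "lip_grad_d d D g L" and L: "0 \<le> L"
    and x: "x \<in> D" and y: "y \<in> D"
  shows "\<bar>f y - f x - innerd d (g x) (\<lambda>i. y i - x i)\<bar> \<le> L * (distd d y x)^2"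
proof -
  define z where "z t = restrict (\<lambda>i. (1 - t) * x i + t * y i) {..<d}" for t
  define c where "c = innerd d (g x) (\<lambda>i. y i - x i)"
  define \<psi> where "\<psi> t = f (z t) - t * c" for t
  define \<Delta> where "\<Delta> = distd d y x"
  have \<Delta>0: "0 \<le> \<Delta>" by (simp add: \<Delta>_def distd_nonneg)
  have zD: "z t \<in> D" if "t \<in> {0..1}" for t
    using cv x y that unfolding convex_d_def z_def by auto
  have xR: "x \<in> Rd d" and yR: "y \<in> Rd d" using sub x y by auto
  have z0: "z 0 = x" using Rd_restrict[OF xR] by (simp add: z_def)
  have z1: "z 1 = y" using Rd_restrict[OF yR] by (simp add: z_def)
  have zdist: "distd d (z s) (z t) = \<bar>s - t\<bar> * \<Delta>" for s t
    unfolding z_def \<Delta>_def by (rule distd_seg)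
  have zdiff: "innerd d a (\<lambda>i. z s i - z t i) = (s - t) * innerd d a (\<lambda>i. y i - x i)" for a s t
  proof -
    have "innerd d a (\<lambda>i. z s i - z t i) = innerd d a (\<lambda>i. (s - t) * (y i - x i))"
      unfolding innerd_def z_def by (intro sum.cong) (auto simp: algebra_simps)
    then show ?thesis by (simp add: innerd_scale)
  qed
  have der: "(\<psi> has_field_derivative (innerd d (g (z t)) (\<lambda>i. y i - x i) - c)) (at t within {0..1})"
    if t: "t \<in> {0..1}" for t
    unfolding has_field_derivative_def has_derivative_within_alt
  proof (intro conjI allI impI)
    show "bounded_linear ((*) (innerd d (g (z t)) (\<lambda>i. y i - x i) - c))"
      by (rule bounded_linear_mult_right)
    fix e :: real assume e: "0 < e"
    define e' where "e' = e / (\<Delta> + 1)"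
    have e': "0 < e'" using e \<Delta>0 by (simp add: e'_def)
    obtain \<delta>' where \<delta>': "\<delta>' > 0" and H: "\<And>w. w \<in> D \<Longrightarrow> distd d w (z t) < \<delta>' \<Longrightarrow>
        \<bar>f w - f (z t) - innerd d (g (z t)) (\<lambda>i. w i - z t i)\<bar> \<le> e' * distd d w (z t)"
      using gr zD[OF t] e' unfolding is_grad_on_def by blast
    show "\<exists>\<delta>>0. \<forall>s\<in>{0..1}. norm (s - t) < \<delta> \<longrightarrow>
        norm (\<psi> s - \<psi> t - (innerd d (g (z t)) (\<lambda>i. y i - x i) - c) * (s - t)) \<le> e * norm (s - t)"
    proof (intro exI[of _ "\<delta>' / (\<Delta> + 1)"] conjI ballI impI)
      show "0 < \<delta>' / (\<Delta> + 1)" using \<delta>' \<Delta>0 by simp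
      fix s :: real assume s: "s \<in> {0..1}" and st: "norm (s - t) < \<delta>' / (\<Delta> + 1)"
      have "distd d (z s) (z t) = \<bar>s - t\<bar> * \<Delta>" by (rule zdist)
      also have "\<dots> \<le> \<bar>s - t\<bar> * (\<Delta> + 1)" by (simp add: mult_left_mono)
      also have "\<dots> < \<delta>'" using st \<Delta>0 by (simp add: pos_less_divide_eq)
      finally have "distd d (z s) (z t) < \<delta>'" .
      from H[OF zD[OF s] this]
      have "\<bar>f (z s) - f (z t) - (s - t) * innerd d (g (z t)) (\<lambda>i. y i - x i)\<bar> \<le> e' * (\<bar>s - t\<bar> * \<Delta>)"
        by (simp add: zdiff zdist)
      also have "\<dots> \<le> e * \<bar>s - t\<bar>"
      proof -
        have "e' * \<Delta> \<le> e" using e \<Delta>0 by (simp add: e'_def field_simps)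
        then have "e' * \<Delta> * \<bar>s - t\<bar> \<le> e * \<bar>s - t\<bar>" by (simp add: mult_right_mono)
        then show ?thesis by (simp add: algebra_simps)
      qed
      finally show "norm (\<psi> s - \<psi> t - (innerd d (g (z t)) (\<lambda>i. y i - x i) - c) * (s - t)) \<le> e * norm (s - t)"
        by (simp add: \<psi>_def algebra_simps)
    qed
  qed
  have bnd: "norm (innerd d (g (z t)) (\<lambda>i. y i - x i) - c) \<le> L * \<Delta>^2" if t: "t \<in> {0..1}" for t
  proof -
    have "norm (innerd d (g (z t)) (\<lambda>i. y i - x i) - c) = \<bar>innerd d (\<lambda>i. g (z t) i - g x i) (\<lambda>i. y i - x i)\<bar>"
      by (simp add: c_def innerd_diff)
    also have "\<dots> \<le> distd d (g (z t)) (g x) * \<Delta>"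
      unfolding \<Delta>_def by (rule innerd_dist)
    also have "\<dots> \<le> (L * distd d (z t) x) * \<Delta>"
      using lip zD[OF t] x \<Delta>0 unfolding lip_grad_d_def by (intro mult_right_mono) auto
    also have "distd d (z t) x = t * \<Delta>" using zdist[of t 0] t z0 by simp
    also have "L * (t * \<Delta>) * \<Delta> \<le> L * \<Delta>^2"
      using t L \<Delta>0 by (simp add: power2_eq_square mult_left_le_one_le mult_le_one mult.assoc mult_left_mono mult_right_mono)
    finally show ?thesis .
  qed
  have "norm (\<psi> 1 - \<psi> 0) \<le> L * \<Delta>^2 * norm (1 - 0::real)"
    by (rule field_differentiable_bound[OF convex_real_interval(5) der bnd]) auto
  then show ?thesis by (simp add: \<psi>_def z0 z1 c_def \<Delta>_def)
qed



lemma grad_coord_bound: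
  assumes cv: "convex_d d D" and sub: "D \<subseteq> Rd d"
    and gr: "is_grad_on d D f g" and lip: "lip_grad_d d D g L" and L: "0 \<le> L"
    and sup: "sup_le1 D f" and x0: "x0 \<in> D" and r: "0 < r"
    and ball: "\<forall>y\<in>Rd d. distd d x0 y < r \<longrightarrow> y \<in> D" and i: "i < d"
  shows "\<bar>g x0 i\<bar> \<le> 4 / r + L * r"
proof -
  define t where "t = r / 2"
  have t: "0 < t" using r by (simp add: t_def)
  define y where "y = restrict (\<lambda>j. x0 j + (if j = i then t else 0)) {..<d}"
  have "distd d x0 y = sqrt ((\<Sum>j<d. (if j = i then t^2 else 0)))"
    unfolding distd_def y_def by (intro arg_cong[where f=sqrt] sum.cong) auto
  also have "\<dots> = t" using i t by simp
  finally have dxy: "distd d x0 y = t" .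
  have yD: "y \<in> D" using ball dxy r by (simp add: y_def restrict_in_Rd t_def)
  have inn: "innerd d (g x0) (\<lambda>j. y j - x0 j) = t * g x0 i"
  proof -
    have "innerd d (g x0) (\<lambda>j. y j - x0 j) = (\<Sum>j<d. (if j = i then t * g x0 i else 0))"
      unfolding innerd_def y_def by (intro sum.cong) auto
    then show ?thesis using i by simp
  qed
  have T: "\<bar>f y - f x0 - t * g x0 i\<bar> \<le> L * t^2"
    using taylor[OF cv sub gr lip L x0 yD] dxy by (simp add: inn distd_sym)
  have "\<bar>f y\<bar> \<le> 1" "\<bar>f x0\<bar> \<le> 1" using sup yD x0 unfolding sup_le1_def by auto
  then have "t * \<bar>g x0 i\<bar> \<le> 2 + L * t^2" using T t by (simp add: abs_mult)
  then have "\<bar>g x0 i\<bar> \<le> (2 + L * t^2) / t" using t by (simp add: field_simps)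
  also have "\<dots> = 4 / r + L * (r / 2)" using r by (simp add: t_def field_simps power2_eq_square)
  also have "\<dots> \<le> 4 / r + L * r" using L r by (simp add: mult_left_mono)
  finally show ?thesis .
qed

definition mybox :: "nat \<Rightarrow> (nat \<Rightarrow> real) \<Rightarrow> real \<Rightarrow> (nat \<Rightarrow> real) set" where
  "mybox d y c = {w. \<forall>i<d. \<bar>w i - y i\<bar> < c / (real d + 1)}"

lemma box_open: "open (mybox d y c)"
proof -
  have "mybox d y c = (\<Inter>i\<in>{..<d}. {w. \<bar>w i - y i\<bar> < c / (real d + 1)})"
    unfolding mybox_def by auto
  also have "open \<dots>"
    by (intro open_INT finite_lessThan ballI open_Collect_less continuous_intros) auto
  finally show ?thesis .
qed

lemma box_center: "0 < c \<Longrightarrow> y \<in> mybox d y c"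
  unfolding mybox_def by (simp add: add_pos_nonneg)

lemma box_dist:
  assumes "0 < c" "w \<in> mybox d y c"
  shows "distd d (restrict w {..<d}) (restrict y {..<d}) < c"
proof -
  have "distd d (restrict w {..<d}) (restrict y {..<d}) = L2_set (\<lambda>i. w i - y i) {..<d}"
    unfolding distd_L2 by (rule L2_set_cong) auto
  also have "\<dots> \<le> (\<Sum>i<d. \<bar>w i - y i\<bar>)" by (rule L2_set_le_sum_abs)
  also have "\<dots> \<le> (\<Sum>i<d. c / (real d + 1))"
    using assms unfolding mybox_def by (intro sum_mono) auto
  also have "\<dots> = real d * c / (real d + 1)" by simp
  also have "\<dots> < c" using assms by (simp add: field_simps)
  finally show ?thesis .
qed

lemma grad_cont:
  assumes gr: "is_grad_on d D f g" and x: "x \<in> D" and e: "0 < e"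
  shows "\<exists>\<delta>>0. \<forall>y\<in>D. distd d y x < \<delta> \<longrightarrow> \<bar>f y - f x\<bar> < e"
proof -
  obtain \<delta> where \<delta>: "\<delta> > 0" and H: "\<And>y. y \<in> D \<Longrightarrow> distd d y x < \<delta> \<Longrightarrow>
      \<bar>f y - f x - innerd d (g x) (\<lambda>i. y i - x i)\<bar> \<le> 1 * distd d y x"
    using gr x unfolding is_grad_on_def by (meson zero_less_one)
  define G where "G = L2_set (g x) {..<d} + 1"
  have G: "0 < G" by (simp add: G_def add_nonneg_pos)
  show ?thesis
  proof (intro exI[of _ "min \<delta> (e / G)"] conjI ballI impI)
    show "0 < min \<delta> (e / G)" using \<delta> e G by simp
    fix y assume y: "y \<in> D" and dy: "distd d y x < min \<delta> (e / G)"
    have "\<bar>f y - f x\<bar> \<le> \<bar>innerd d (g x) (\<lambda>i. y i - x i)\<bar> + distd d y x"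
      using H[OF y] dy by linarith
    also have "\<dots> \<le> L2_set (g x) {..<d} * distd d y x + distd d y x"
      using innerd_norm by (simp)
    also have "\<dots> = G * distd d y x" by (simp add: G_def algebra_simps)
    also have "\<dots> < G * (e / G)" using dy G by (intro mult_strict_left_mono) auto
    also have "\<dots> = e" using G by simp
    finally show "\<bar>f y - f x\<bar> < e" .
  qed
qed

lemma lebd_id_measurable: "(\<lambda>x. x) \<in> borel_measurable (lebd d)"
proof (rule measurable_coordinatewise_then_product)
  fix i :: nat
  show "(\<lambda>x. x i) \<in> borel_measurable (lebd d)"
  proof (cases "i < d")
    case True
    then show ?thesis unfolding lebd_def
      using measurable_component_singleton[of i "{..<d}" "\<lambda>_. lborel"] by simp
  next
    case False
    have "(\<lambda>x. x i) \<in> borel_measurable (lebd d) \<longleftrightarrow> (\<lambda>x. undefined :: real) \<in> borel_measurable (lebd d)"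
      using False by (intro measurable_cong[of "lebd d" "\<lambda>x. x i" "\<lambda>x. undefined :: real"]) (auto simp: space_lebd Rd_def PiE_iff extensional_def)
    then show ?thesis by simp
  qed
qed

lemma meas_f:
  assumes op: "open_d d D" and gr: "is_grad_on d D f g"
  shows "(\<lambda>x. indicator D x * f x) \<in> borel_measurable (lebd d)"
proof -
  define U where "U = {y::nat\<Rightarrow>real. restrict y {..<d} \<in> D}"
  define F where "F y = f (restrict y {..<d})" for y
  have "open U"
  proof (subst open_subopen, intro ballI)
    fix y assume y: "y \<in> U"
    then obtain e where e: "e > 0" and H: "\<forall>z\<in>Rd d. distd d (restrict y {..<d}) z < e \<longrightarrow> z \<in> D"
      using op unfolding open_d_def U_def by blast
    have "mybox d y e \<subseteq> U"
    proof
      fix w assume "w \<in> mybox d y e"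
      then have "distd d (restrict y {..<d}) (restrict w {..<d}) < e"
        using box_dist[OF e] by (simp add: distd_sym)
      then show "w \<in> U" using H restrict_in_Rd unfolding U_def by blast
    qed
    then show "\<exists>T. open T \<and> y \<in> T \<and> T \<subseteq> U"
      using box_open[of d y e] box_center[OF e, of y d] by blast
  qed
  have "continuous_on U F"
    unfolding continuous_on_def
  proof (intro ballI)
    fix y assume y: "y \<in> U"
    show "(F \<longlongrightarrow> F y) (at y within U)"
      unfolding tendsto_iff
    proof (intro allI impI)
      fix e :: real assume e: "0 < e"
      obtain \<delta> where \<delta>: "\<delta> > 0" and H: "\<forall>z\<in>D. distd d z (restrict y {..<d}) < \<delta> \<longrightarrow>
          \<bar>f z - f (restrict y {..<d})\<bar> < e"
        using grad_cont[OF gr _ e] y unfolding U_def by blast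
      show "\<forall>\<^sub>F w in at y within U. dist (F w) (F y) < e"
        unfolding eventually_at_topological
      proof (intro exI[of _ "mybox d y \<delta>"] conjI ballI impI)
        show "open (mybox d y \<delta>)" by (rule box_open)
        show "y \<in> mybox d y \<delta>" by (rule box_center[OF \<delta>])
        fix w assume w: "w \<in> mybox d y \<delta>" and wU: "w \<in> U"
        have "distd d (restrict w {..<d}) (restrict y {..<d}) < \<delta>" by (rule box_dist[OF \<delta> w])
        then have "\<bar>f (restrict w {..<d}) - f (restrict y {..<d})\<bar> < e"
          using H wU unfolding U_def by blast
        then show "dist (F w) (F y) < e" by (simp add: F_def dist_real_def)
      qed
    qed
  qed
  then have m: "(\<lambda>y. indicator U y *\<^sub>R F y) \<in> borel_measurable borel"
    using \<open>open U\<close> by (intro borel_measurable_continuous_on_indicator) auto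
  have "(\<lambda>x. indicator U x *\<^sub>R F x) \<in> borel_measurable (lebd d)"
    using measurable_compose[OF lebd_id_measurable m] .
  moreover have "\<And>x. x \<in> space (lebd d) \<Longrightarrow> indicator U x *\<^sub>R F x = indicator D x * f x"
    by (auto simp: space_lebd Rd_restrict U_def F_def indicator_def)
  ultimately show ?thesis
    using measurable_cong[of "lebd d" "\<lambda>x. indicator U x *\<^sub>R F x" "\<lambda>x. indicator D x * f x" borel]
    by simp
qed



lemma int_bnd:
  fixes F :: "'a \<Rightarrow> real"
  assumes A: "A \<in> sets M" and fin: "emeasure M A < \<infinity>"
    and m: "(\<lambda>x. indicator A x * F x) \<in> borel_measurable M"
    and b: "\<And>x. x \<in> A \<Longrightarrow> \<bar>F x\<bar> \<le> B"
  shows "integrable M (\<lambda>x. indicator A x * F x)"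
    and "\<bar>\<integral>x. indicator A x * F x \<partial>M\<bar> \<le> B * measure M A"
proof -
  show i1: "integrable M (\<lambda>x. indicator A x * F x)"
    by (rule integrableI_bounded_set[where A=A and B=B]) (use A fin m b in \<open>auto simp: indicator_def\<close>)
  have i2: "integrable M (\<lambda>x. indicator A x * B)"
    by (rule integrableI_bounded_set[where A=A and B="\<bar>B\<bar>"]) (use A fin in \<open>auto simp: indicator_def\<close>)
  have "\<bar>\<integral>x. indicator A x * F x \<partial>M\<bar> \<le> (\<integral>x. norm (indicator A x * F x) \<partial>M)"
    using integral_norm_bound[of M "\<lambda>x. indicator A x * F x"] by simp
  also have "\<dots> \<le> (\<integral>x. indicator A x * B \<partial>M)"
    using i1 i2 b by (intro integral_mono) (auto simp: indicator_def integrable_norm)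
  also have "\<dots> = B * measure M A"
    using A by (simp add: sets.Int_space_eq2)
  finally show "\<bar>\<integral>x. indicator A x * F x \<partial>M\<bar> \<le> B * measure M A" .
qed

lemma convex_comb:
  assumes cv: "convex_d d C" and sub: "C \<subseteq> Rd d"
  shows "finite S \<Longrightarrow> S \<noteq> {} \<Longrightarrow> (\<forall>s\<in>S. 0 \<le> w s) \<Longrightarrow> sum w S = 1 \<Longrightarrow> (\<forall>s\<in>S. q s \<in> C)
    \<Longrightarrow> restrict (\<lambda>i. \<Sum>s\<in>S. w s * q s i) {..<d} \<in> C"
proof (induction S arbitrary: w rule: finite_ne_induct)
  case (singleton a)
  then have "restrict (\<lambda>i. \<Sum>s\<in>{a}. w s * q s i) {..<d} = q a"
    using Rd_restrict[of "q a" d] sub by auto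
  then show ?case using singleton by simp
next
  case (insert a S)
  define W where "W = sum w S"
  have W0: "0 \<le> W" using insert by (simp add: W_def sum_nonneg)
  have wa: "w a = 1 - W" using insert by (simp add: W_def)
  have W1: "W \<le> 1" using insert wa by simp
  show ?case
  proof (cases "W = 0")
    case True
    then have "\<forall>s\<in>S. w s = 0" using insert sum_nonneg_eq_0_iff[of S w] by (simp add: W_def)
    then have "restrict (\<lambda>i. \<Sum>s\<in>insert a S. w s * q s i) {..<d} = restrict (q a) {..<d}"
      using insert True wa by (intro restrict_ext) simp
    also have "\<dots> = q a" using Rd_restrict[of "q a" d] sub insert by auto
    finally show ?thesis using insert by simp
  next
    case False
    then have Wp: "0 < W" using W0 by simp
    define p' where "p' = restrict (\<lambda>i. \<Sum>s\<in>S. (w s / W) * q s i) {..<d}"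
    have "p' \<in> C" unfolding p'_def
      using insert Wp by (intro insert.IH) (auto simp: W_def sum_divide_distrib[symmetric])
    then have "restrict (\<lambda>i. (1 - W) * q a i + W * p' i) {..<d} \<in> C"
      using cv insert W0 W1 unfolding convex_d_def by blast
    also have "restrict (\<lambda>i. (1 - W) * q a i + W * p' i) {..<d} = restrict (\<lambda>i. \<Sum>s\<in>insert a S. w s * q s i) {..<d}"
    proof (intro restrict_ext)
      fix i assume "i \<in> {..<d}"
      then have "W * p' i = (\<Sum>s\<in>S. w s * q s i)"
        using Wp by (simp add: p'_def sum_distrib_left)
      then show "(1 - W) * q a i + W * p' i = (\<Sum>s\<in>insert a S. w s * q s i)"
        using insert wa by simp
    qed
    finally show ?thesis .
  qed
qed

lemma ball_convex:
  assumes cv: "convex_d d D" and x0: "x0 \<in> Rd d"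
  shows "convex_d d {x\<in>D. distd d x x0 < \<rho>}"
  unfolding convex_d_def
proof (intro ballI allI impI)
  fix x y t assume x: "x \<in> {x\<in>D. distd d x x0 < \<rho>}" and y: "y \<in> {x\<in>D. distd d x x0 < \<rho>}"
    and t: "0 \<le> t \<and> t \<le> (1::real)"
  have inD: "restrict (\<lambda>i. (1 - t) * x i + t * y i) {..<d} \<in> D"
    using cv x y t unfolding convex_d_def by blast
  have "distd d (restrict (\<lambda>i. (1 - t) * x i + t * y i) {..<d}) x0
      = L2_set (\<lambda>i. (1 - t) * (x i - x0 i) + t * (y i - x0 i)) {..<d}"
    unfolding distd_L2 by (rule L2_set_cong) (auto simp: algebra_simps)
  also have "\<dots> \<le> L2_set (\<lambda>i. (1 - t) * (x i - x0 i)) {..<d} + L2_set (\<lambda>i. t * (y i - x0 i)) {..<d}"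
    by (rule L2_set_triangle_ineq)
  also have "\<dots> = (1 - t) * distd d x x0 + t * distd d y x0"
    using t by (simp add: distd_L2 L2_set_right_distrib)
  also have "\<dots> < \<rho>"
    using x y t by (intro convex_bound_lt) auto
  finally show "restrict (\<lambda>i. (1 - t) * x i + t * y i) {..<d} \<in> {x\<in>D. distd d x x0 < \<rho>}"
    using inD by simp
qed



lemma comp_meas[measurable]: "(\<lambda>x. x i) \<in> borel_measurable (lebd d)"
  using measurable_compose[OF lebd_id_measurable, of "\<lambda>x. x i" borel d]
  by (simp add: measurable_compose[OF lebd_id_measurable])

lemma split_int:
  fixes F :: "(nat \<Rightarrow> real) \<Rightarrow> real"
  assumes fin: "finite Z" and Am: "\<And>z. z \<in> Z \<Longrightarrow> A z \<in> sets M"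
    and Afin: "\<And>z. z \<in> Z \<Longrightarrow> emeasure M (A z) < \<infinity>"
    and cover: "\<And>x. indicator K x = (\<Sum>z\<in>Z. indicator (A z) x :: real)"
    and sub: "\<And>z. z \<in> Z \<Longrightarrow> A z \<subseteq> K"
    and m: "(\<lambda>x. indicator K x * F x) \<in> borel_measurable M"
    and b: "\<And>x. x \<in> K \<Longrightarrow> \<bar>F x\<bar> \<le> B"
  shows "(\<integral>x. indicator K x * F x \<partial>M) = (\<Sum>z\<in>Z. \<integral>x. indicator (A z) x * F x \<partial>M)"
proof -
  have eq: "(\<lambda>x. indicator K x * F x) = (\<lambda>x. \<Sum>z\<in>Z. indicator (A z) x * F x)"
    by (simp add: cover sum_distrib_right)
  have "integrable M (\<lambda>x. indicator (A z) x * F x)" if z: "z \<in> Z" for z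
  proof (rule int_bnd(1)[where B=B])
    show "A z \<in> sets M" by (rule Am[OF z])
    show "emeasure M (A z) < \<infinity>" by (rule Afin[OF z])
    have "(\<lambda>x. indicator (A z) x * F x) = (\<lambda>x. indicator (A z) x * (indicator K x * F x))"
      using sub[OF z] by (auto simp: indicator_def fun_eq_iff)
    also have "\<dots> \<in> borel_measurable M" using Am[OF z] m by measurable
    finally show "(\<lambda>x. indicator (A z) x * F x) \<in> borel_measurable M" .
    fix x assume "x \<in> A z" then show "\<bar>F x\<bar> \<le> B" using sub[OF z] b by blast
  qed
  then show ?thesis unfolding eq using Bochner_Integration.integral_sum[where I=Z and M=M and f="\<lambda>z x. indicator (A z) x * F x"] by simp
qed

lemma grid:
  fixes K :: "(nat \<Rightarrow> real) set"
  assumes Km: "K \<in> sets (lebd d)" and Kfin: "emeasure (lebd d) K < \<infinity>"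
    and Kpos: "0 < measure (lebd d) K" and cvK: "convex_d d K" and KR: "K \<subseteq> Rd d"
    and bdd: "\<And>x i. x \<in> K \<Longrightarrow> i < d \<Longrightarrow> \<bar>x i - c i\<bar> \<le> \<rho>"
    and h: "0 < h"
  shows "\<exists>p\<in>K. \<forall>i<d. \<bar>\<integral>x. indicator K x * (x i - p i) \<partial>lebd d\<bar> \<le> h * measure (lebd d) K"
proof -
  define M where "M = lebd d"
  define \<mu> where "\<mu> = measure M K"
  have \<mu>: "0 < \<mu>" using Kpos by (simp add: \<mu>_def M_def)
  define idx where "idx x = restrict (\<lambda>i. \<lfloor>x i / h\<rfloor>) {..<d}" for x :: "nat \<Rightarrow> real"
  define Z where "Z = idx ` K"
  define A where "A z = {x\<in>K. idx x = z}" for z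
  have finZ: "finite Z"
  proof (rule finite_subset)
    show "Z \<subseteq> PiE {..<d} (\<lambda>i. {\<lfloor>(c i - \<rho>) / h\<rfloor> .. \<lfloor>(c i + \<rho>) / h\<rfloor>})"
    proof
      fix z assume "z \<in> Z"
      then obtain x where x: "x \<in> K" and z: "z = idx x" unfolding Z_def by blast
      have "\<lfloor>(c i - \<rho>) / h\<rfloor> \<le> \<lfloor>x i / h\<rfloor> \<and> \<lfloor>x i / h\<rfloor> \<le> \<lfloor>(c i + \<rho>) / h\<rfloor>" if "i < d" for i
        using bdd[OF x that] h by (intro conjI floor_mono divide_right_mono) (auto simp: abs_le_iff)
      then show "z \<in> PiE {..<d} (\<lambda>i. {\<lfloor>(c i - \<rho>) / h\<rfloor> .. \<lfloor>(c i + \<rho>) / h\<rfloor>})"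
        by (auto simp: z idx_def)
    qed
  qed (auto intro!: finite_PiE)
  have Aeq: "A z = K \<inter> {x\<in>space M. \<forall>i\<in>{..<d}. of_int (z i) \<le> x i / h \<and> x i / h < of_int (z i) + 1}"
    if "z \<in> Z" for z
  proof -
    have ze: "z \<in> extensional {..<d}" using that by (auto simp: Z_def idx_def)
    have "idx x = z \<longleftrightarrow> (\<forall>i\<in>{..<d}. \<lfloor>x i / h\<rfloor> = z i)" for x
      using ze unfolding idx_def by (auto simp: fun_eq_iff extensional_def restrict_def)
    then show ?thesis using KR unfolding A_def by (auto simp: floor_eq_iff M_def space_lebd)
  qed
  have Am: "A z \<in> sets M" if "z \<in> Z" for z
    unfolding Aeq[OF that] using Km unfolding M_def by measurable
  have AK: "A z \<subseteq> K" for z by (auto simp: A_def)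
  have Afin: "emeasure M (A z) < \<infinity>" for z
    using emeasure_mono[OF AK Km] Kfin unfolding M_def by (meson order_le_less_trans)
  have cover: "indicator K x = (\<Sum>z\<in>Z. indicator (A z) x :: real)" for x
  proof (cases "x \<in> K")
    case True
    then have "(\<Sum>z\<in>Z. indicator (A z) x :: real) = (\<Sum>z\<in>Z. if idx x = z then 1 else 0)"
      by (intro sum.cong) (auto simp: A_def)
    also have "\<dots> = 1" using True finZ by (simp add: Z_def)
    finally show ?thesis using True by simp
  next
    case False then show ?thesis by (simp add: A_def indicator_def)
  qed
  define rep where "rep z = (SOME x. x \<in> A z)" for z
  have rep: "rep z \<in> A z" if "z \<in> Z" for z
  proof -
    from that obtain x where "x \<in> K" "z = idx x" by (auto simp: Z_def)
    then have "x \<in> A z" by (simp add: A_def)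
    then show ?thesis unfolding rep_def by (rule someI[where P="\<lambda>x. x \<in> A z"])
  qed
  define w where "w z = measure M (A z)" for z
  have sumw: "(\<Sum>z\<in>Z. w z) = \<mu>"
  proof -
    have "\<mu> = (\<integral>x. indicator K x * 1 \<partial>M)"
      using Km by (simp add: \<mu>_def M_def sets.Int_space_eq2)
    also have "\<dots> = (\<Sum>z\<in>Z. \<integral>x. indicator (A z) x * 1 \<partial>M)"
      by (rule split_int[OF finZ Am Afin cover AK, where B=1]) (use Km in \<open>auto simp: M_def\<close>)
    also have "\<dots> = (\<Sum>z\<in>Z. w z)"
      using Am by (intro sum.cong) (auto simp: w_def sets.Int_space_eq2)
    finally show ?thesis by simp
  qed
  define p where "p = restrict (\<lambda>i. \<Sum>z\<in>Z. (w z / \<mu>) * rep z i) {..<d}"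
  have Kne: "K \<noteq> {}" using \<mu> by (auto simp: \<mu>_def)
  have pK: "p \<in> K" unfolding p_def
  proof (rule convex_comb[OF cvK KR finZ])
    show "Z \<noteq> {}" using Kne by (simp add: Z_def)
    show "\<forall>z\<in>Z. 0 \<le> w z / \<mu>" using \<mu> by (simp add: w_def)
    show "(\<Sum>z\<in>Z. w z / \<mu>) = 1" using \<mu> sumw by (simp add: sum_divide_distrib[symmetric])
    show "\<forall>z\<in>Z. rep z \<in> K" using rep AK by blast
  qed
  have close: "\<bar>x i - rep z i\<bar> < h" if z: "z \<in> Z" and x: "x \<in> A z" and i: "i < d" for z x i
  proof -
    have "\<lfloor>x i / h\<rfloor> = z i" "\<lfloor>rep z i / h\<rfloor> = z i"
      using x rep[OF z] i by (auto simp: A_def idx_def fun_eq_iff dest!: spec[of _ i])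
    then have "\<bar>x i / h - rep z i / h\<bar> < 1" by linarith
    then have "\<bar>(x i - rep z i) / h\<bar> < 1" by (simp add: diff_divide_distrib)
    then show ?thesis using h by (simp add: abs_div pos_divide_less_eq)
  qed
  have "\<forall>i<d. \<bar>\<integral>x. indicator K x * (x i - p i) \<partial>M\<bar> \<le> h * \<mu>"
  proof (intro allI impI)
    fix i assume i: "i < d"
    have pi: "p i = (\<Sum>z\<in>Z. (w z / \<mu>) * rep z i)" using i by (simp add: p_def)
    have bK: "\<bar>x i - p i\<bar> \<le> 2 * \<rho>" if "x \<in> K" for x
      using bdd[OF that i] bdd[OF pK i] by linarith
    have "(\<integral>x. indicator K x * (x i - p i) \<partial>M) = (\<Sum>z\<in>Z. \<integral>x. indicator (A z) x * (x i - p i) \<partial>M)"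
      by (rule split_int[OF finZ Am Afin cover AK, where B="2*\<rho>"]) (use Km bK in \<open>auto simp: M_def\<close>)
    also have "\<dots> = (\<Sum>z\<in>Z. (\<integral>x. indicator (A z) x * (x i - rep z i) \<partial>M) + w z * (rep z i - p i))"
    proof (intro sum.cong refl)
      fix z assume z: "z \<in> Z"
      have i1: "integrable M (\<lambda>x. indicator (A z) x * (x i - rep z i))"
      proof (rule int_bnd(1)[where B=h])
        fix x assume "x \<in> A z" then show "\<bar>x i - rep z i\<bar> \<le> h" using close[OF z _ i] by fastforce
      qed (use Am[OF z] Afin in \<open>auto simp: M_def\<close>)
      have i2: "integrable M (\<lambda>x. indicator (A z) x * (rep z i - p i))"
        by (rule int_bnd(1)[where B="\<bar>rep z i - p i\<bar>"]) (use Am[OF z] Afin in \<open>auto simp: M_def\<close>)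
      have "(\<integral>x. indicator (A z) x * (x i - p i) \<partial>M)
          = (\<integral>x. indicator (A z) x * (x i - rep z i) + indicator (A z) x * (rep z i - p i) \<partial>M)"
        by (simp add: algebra_simps)
      also have "\<dots> = (\<integral>x. indicator (A z) x * (x i - rep z i) \<partial>M) + w z * (rep z i - p i)"
        using i1 i2 Am[OF z] by (simp add: w_def sets.Int_space_eq2)
      finally show "(\<integral>x. indicator (A z) x * (x i - p i) \<partial>M)
          = (\<integral>x. indicator (A z) x * (x i - rep z i) \<partial>M) + w z * (rep z i - p i)" .
    qed
    also have "\<dots> = (\<Sum>z\<in>Z. \<integral>x. indicator (A z) x * (x i - rep z i) \<partial>M)"
    proof -
      have "(\<Sum>z\<in>Z. w z * (rep z i - p i)) = (\<Sum>z\<in>Z. w z * rep z i) - \<mu> * p i"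
      proof -
        have "(\<Sum>z\<in>Z. w z * (rep z i - p i)) = (\<Sum>z\<in>Z. w z * rep z i) - (\<Sum>z\<in>Z. w z * p i)"
          by (simp add: right_diff_distrib sum_subtractf)
        also have "(\<Sum>z\<in>Z. w z * p i) = \<mu> * p i"
          by (simp add: sum_distrib_right[symmetric] sumw)
        finally show ?thesis .
      qed
      also have "\<dots> = 0" using \<mu> by (simp add: pi sum_distrib_left)
      finally show ?thesis by (simp add: sum.distrib)
    qed
    finally have eq: "(\<integral>x. indicator K x * (x i - p i) \<partial>M) = (\<Sum>z\<in>Z. \<integral>x. indicator (A z) x * (x i - rep z i) \<partial>M)" .
    have "\<bar>\<Sum>z\<in>Z. \<integral>x. indicator (A z) x * (x i - rep z i) \<partial>M\<bar> \<le> (\<Sum>z\<in>Z. h * w z)"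
    proof (rule order_trans[OF sum_abs sum_mono])
      fix z assume z: "z \<in> Z"
      show "\<bar>\<integral>x. indicator (A z) x * (x i - rep z i) \<partial>M\<bar> \<le> h * w z"
        unfolding w_def
      proof (rule int_bnd(2))
        fix x assume "x \<in> A z" then show "\<bar>x i - rep z i\<bar> \<le> h" using close[OF z _ i] by fastforce
      qed (use Am[OF z] Afin in \<open>auto simp: M_def\<close>)
    qed
    also have "\<dots> = h * \<mu>" by (simp add: sum_distrib_left[symmetric] sumw)
    finally show "\<bar>\<integral>x. indicator K x * (x i - p i) \<partial>M\<bar> \<le> h * \<mu>" using eq by simp
  qed
  then show ?thesis using pK unfolding M_def \<mu>_def by blast
qed



lemma core:
  assumes cv: "convex_d d D" and op: "open_d d D" and Dm: "D \<in> sets (lebd d)"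
    and D1: "measure (lebd d) D = 1" and Dfin: "emeasure (lebd d) D < \<infinity>"
    and x0: "x0 \<in> D" and \<rho>: "0 < \<rho>" and L: "0 < L" and \<eta>: "0 < \<eta>"
    and Kcs: "measure (lebd d) {x\<in>D. \<rho> \<le> distd d x x0} < 1"
  shows "\<exists>p\<in>D. \<forall>f\<in>F2 d D L. \<bar>(LINT x:D|lebd d. f x) - f p\<bar>
            \<le> 2 * measure (lebd d) {x\<in>D. \<rho> \<le> distd d x x0} + 4 * L * \<rho>^2 + \<eta>"
proof -
  define M where "M = lebd d"
  have sub: "D \<subseteq> Rd d" using op by (simp add: open_d_def)
  define K where "K = {x\<in>D. distd d x x0 < \<rho>}"
  define Kc where "Kc = {x\<in>D. \<rho> \<le> distd d x x0}"
  have distm[measurable]: "(\<lambda>x. distd d x x0) \<in> borel_measurable M"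
    unfolding distd_def M_def by measurable
  have compM[measurable]: "(\<lambda>x. x i) \<in> borel_measurable M" for i
    unfolding M_def by (rule comp_meas)
  have DmM[measurable]: "D \<in> sets M" using Dm by (simp add: M_def)
  have "K = D \<inter> {x\<in>space M. distd d x x0 < \<rho>}"
    using sub by (auto simp: K_def M_def space_lebd)
  also have "\<dots> \<in> sets M" by measurable
  finally have Km[measurable]: "K \<in> sets M" .
  have "Kc = D \<inter> {x\<in>space M. \<rho> \<le> distd d x x0}"
    using sub by (auto simp: Kc_def M_def space_lebd)
  also have "\<dots> \<in> sets M" by measurable
  finally have Kcm[measurable]: "Kc \<in> sets M" .
  have Kfin: "emeasure M K < \<infinity>"
    using emeasure_mono[of K D M] DmM Dfin by (auto simp: K_def M_def intro: le_less_trans)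
  have Kcfin: "emeasure M Kc < \<infinity>"
    using emeasure_mono[of Kc D M] DmM Dfin by (auto simp: Kc_def M_def intro: le_less_trans)
  have DfinM: "emeasure M D < \<infinity>" using Dfin by (simp add: M_def)
  have "K = D - Kc" by (auto simp: K_def Kc_def)
  then have "measure M K = measure M D - measure M Kc"
    using measure_Diff[of M D Kc] DfinM DmM Kcm by (auto simp: Kc_def)
  then have Kpos: "0 < measure (lebd d) K" using Kcs D1 by (simp add: M_def Kc_def)
  have \<mu>K1: "measure M K \<le> 1"
    using measure_mono_fmeasurable[of K D M] DmM Dfin D1 Km
    by (auto simp: K_def M_def fmeasurable_def)
  have \<mu>K0: "0 \<le> measure M K" by simp
  have x0R: "x0 \<in> Rd d" using sub x0 by auto
  have KR: "K \<subseteq> Rd d" using sub by (auto simp: K_def)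
  have cvK: "convex_d d K" unfolding K_def by (rule ball_convex[OF cv x0R])
  have bdd: "\<bar>x i - x0 i\<bar> \<le> \<rho>" if "x \<in> K" "i < d" for x i
    using coord_le_distd[OF that(2), of x x0] that(1) by (auto simp: K_def)
  obtain r where r: "r > 0" and ball: "\<forall>y\<in>Rd d. distd d x0 y < r \<longrightarrow> y \<in> D"
    using op x0 unfolding open_d_def by blast
  define G where "G = 4 / r + L * r + L * \<rho>"
  have G: "0 < G" using r L \<rho> by (simp add: G_def add_pos_pos)
  define h where "h = \<eta> / (real d * G + 1)"
  have h: "0 < h" using \<eta> G by (simp add: h_def add_nonneg_pos)
  have dGh: "real d * G * h \<le> \<eta>"
  proof -
    have "real d * G * h = \<eta> * (real d * G / (real d * G + 1))" by (simp add: h_def field_simps)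
    also have "\<dots> \<le> \<eta> * 1"
    proof (intro mult_left_mono)
      have pos: "0 < real d * G + 1" using G by (simp add: add_nonneg_pos)
      then show "real d * G / (real d * G + 1) \<le> 1" by (simp add: pos_divide_le_eq)
    qed (use \<eta> in simp)
    finally show ?thesis by simp
  qed
  have "\<exists>p\<in>K. \<forall>i<d. \<bar>\<integral>x. indicator K x * (x i - p i) \<partial>lebd d\<bar> \<le> h * measure (lebd d) K"
  proof (rule grid[where c=x0 and \<rho>=\<rho>])
    fix x i assume "x \<in> K" "i < d" then show "\<bar>x i - x0 i\<bar> \<le> \<rho>" by (rule bdd)
  next
    show "K \<in> sets (lebd d)" using Km by (simp add: M_def)
    show "emeasure (lebd d) K < \<infinity>" using Kfin by (simp add: M_def)
    show "0 < measure (lebd d) K" by (rule Kpos)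
  qed (use cvK KR h in auto)
  then obtain p where pK: "p \<in> K" and E: "\<And>i. i < d \<Longrightarrow> \<bar>\<integral>x. indicator K x * (x i - p i) \<partial>M\<bar> \<le> h * measure M K"
    unfolding M_def by blast
  have pD: "p \<in> D" using pK by (simp add: K_def)
  show ?thesis
  proof (intro bexI[OF _ pD] ballI)
    fix f assume "f \<in> F2 d D L"
    then obtain g where sup: "sup_le1 D f" and gr: "is_grad_on d D f g" and lip: "lip_grad_d d D g L"
      unfolding F2_def by blast
    define f' where "f' x = indicator D x * f x" for x
    have mf[measurable]: "f' \<in> borel_measurable M"
      using meas_f[OF op gr] unfolding M_def by (simp add: f'_def[abs_def])
    have f'D: "f' x = f x" if "x \<in> D" for x using that by (simp add: f'_def)
    have f1: "\<bar>f x\<bar> \<le> 1" if "x \<in> D" for x using sup that by (simp add: sup_le1_def)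
    have gb: "\<bar>g p i\<bar> \<le> G" if i: "i < d" for i
    proof -
      have "\<bar>g x0 i\<bar> \<le> 4 / r + L * r"
        by (rule grad_coord_bound[OF cv sub gr lip _ sup x0 r ball i]) (use L in simp)
      moreover have "\<bar>g p i - g x0 i\<bar> \<le> L * \<rho>"
      proof -
        have "\<bar>g p i - g x0 i\<bar> \<le> distd d (g p) (g x0)" by (rule coord_le_distd[OF i])
        also have "\<dots> \<le> L * distd d p x0" using lip pD x0 by (simp add: lip_grad_d_def)
        also have "\<dots> \<le> L * \<rho>" using pK L by (simp add: K_def)
        finally show ?thesis .
      qed
      ultimately show ?thesis by (simp add: G_def)
    qed
    define lin where "lin x = (\<Sum>i<d. g p i * (x i - p i))" for x
    have DKKc: "indicator D x * (f' x - f p) = indicator Kc x * (f' x - f p) + indicator K x * lin x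
        + indicator K x * (f' x - f p - lin x)" for x
      by (auto simp: indicator_def K_def Kc_def algebra_simps)
    have b1: "\<bar>f' x - f p\<bar> \<le> 2" if "x \<in> D" for x
      using f1[OF that] f1[OF pD] f'D[OF that] by linarith
    have iD: "integrable M (\<lambda>x. indicator D x * (f' x - f p))"
      by (rule int_bnd(1)[OF DmM DfinM _ b1]) measurable
    have iKc: "integrable M (\<lambda>x. indicator Kc x * (f' x - f p))"
      and I1: "\<bar>\<integral>x. indicator Kc x * (f' x - f p) \<partial>M\<bar> \<le> 2 * measure M Kc"
      by (rule int_bnd[OF Kcm Kcfin _ b1], measurable, simp add: Kc_def)+
    have ix: "integrable M (\<lambda>x. indicator K x * (x i - p i))" if i: "i < d" for i
      by (rule int_bnd(1)[OF Km Kfin, where B="2*\<rho>"], measurable)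
        (use bdd[OF _ i] bdd[OF pK i] in fastforce)
    have iK2: "integrable M (\<lambda>x. indicator K x * lin x)"
      and I2: "(\<integral>x. indicator K x * lin x \<partial>M) = (\<Sum>i<d. g p i * (\<integral>x. indicator K x * (x i - p i) \<partial>M))"
    proof -
      have eq: "(\<lambda>x. indicator K x * lin x) = (\<lambda>x. \<Sum>i<d. g p i * (indicator K x * (x i - p i)))"
        by (auto simp: lin_def sum_distrib_left fun_eq_iff algebra_simps)
      show "integrable M (\<lambda>x. indicator K x * lin x)"
        unfolding eq using ix by (intro Bochner_Integration.integrable_sum integrable_mult_right) auto
      show "(\<integral>x. indicator K x * lin x \<partial>M) = (\<Sum>i<d. g p i * (\<integral>x. indicator K x * (x i - p i) \<partial>M))"
        unfolding eq using ix
        by (subst Bochner_Integration.integral_sum) (auto intro!: integrable_mult_right)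
    qed
    have I2b: "\<bar>\<integral>x. indicator K x * lin x \<partial>M\<bar> \<le> \<eta>"
    proof -
      have "\<bar>\<Sum>i<d. g p i * (\<integral>x. indicator K x * (x i - p i) \<partial>M)\<bar> \<le> (\<Sum>i<d. G * (h * measure M K))"
        by (rule order_trans[OF sum_abs sum_mono]) (use G in \<open>auto simp: abs_mult intro!: mult_mono gb E\<close>)
      also have "\<dots> = real d * G * h * measure M K" by simp
      also have "\<dots> \<le> \<eta> * 1" using dGh \<mu>K1 \<eta> by (intro mult_mono) auto
      finally show ?thesis using I2 by simp
    qed
    have b3: "\<bar>f' x - f p - lin x\<bar> \<le> 4 * L * \<rho>^2" if x: "x \<in> K" for x
    proof -
      have xD: "x \<in> D" using x by (simp add: K_def)
      have "\<bar>f' x - f p - lin x\<bar> = \<bar>f x - f p - innerd d (g p) (\<lambda>i. x i - p i)\<bar>"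
        using f'D[OF xD] by (simp add: lin_def innerd_def)
      also have "\<dots> \<le> L * (distd d x p)^2" by (rule taylor[OF cv sub gr lip _ pD xD]) (use L in simp)
      also have "\<dots> \<le> L * (2 * \<rho>)^2"
      proof -
        have "distd d x p \<le> distd d x x0 + distd d x0 p" by (rule distd_triangle)
        also have "\<dots> \<le> 2 * \<rho>" using x pK by (auto simp: K_def distd_sym)
        finally show ?thesis using L by (intro mult_left_mono power_mono) (auto simp: distd_nonneg)
      qed
      finally show ?thesis by (simp add: power2_eq_square)
    qed
    have linm[measurable]: "lin \<in> borel_measurable M"
      unfolding lin_def by measurable
    have m3: "(\<lambda>x. indicator K x * (f' x - f p - lin x)) \<in> borel_measurable M"
      by measurable
    have iK3: "integrable M (\<lambda>x. indicator K x * (f' x - f p - lin x))"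
      by (rule int_bnd(1)[OF Km Kfin m3 b3])
    have I3: "\<bar>\<integral>x. indicator K x * (f' x - f p - lin x) \<partial>M\<bar> \<le> 4 * L * \<rho>^2 * measure M K"
      by (rule int_bnd(2)[OF Km Kfin m3 b3])
    have I3b: "4 * L * \<rho>^2 * measure M K \<le> 4 * L * \<rho>^2"
      using \<mu>K1 L by (simp add: mult_left_le)
    have intD: "(LINT x:D|lebd d. f x) = (\<integral>x. indicator D x * (f' x - f p) \<partial>M) + f p"
    proof -
      have i0: "integrable M (\<lambda>x. indicator D x * f p)"
        by (rule int_bnd(1)[OF DmM DfinM, where B="\<bar>f p\<bar>"]) auto
      have "(LINT x:D|lebd d. f x) = (\<integral>x. indicator D x * f' x \<partial>M)"
        unfolding set_lebesgue_integral_def M_def by (intro Bochner_Integration.integral_cong refl) (simp add: f'_def indicator_def)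
      also have "(\<lambda>x. indicator D x * f' x) = (\<lambda>x. indicator D x * (f' x - f p) + indicator D x * f p)"
        by (simp add: fun_eq_iff algebra_simps)
      also have "(\<integral>x. indicator D x * (f' x - f p) + indicator D x * f p \<partial>M)
          = (\<integral>x. indicator D x * (f' x - f p) \<partial>M) + (\<integral>x. indicator D x * f p \<partial>M)"
        using iD i0 by simp
      also have "(\<integral>x. indicator D x * f p \<partial>M) = f p"
        using D1 DmM by (simp add: M_def sets.Int_space_eq2)
      finally show ?thesis .
    qed
    have "(\<integral>x. indicator D x * (f' x - f p) \<partial>M) = (\<integral>x. indicator Kc x * (f' x - f p) \<partial>M)
        + (\<integral>x. indicator K x * lin x \<partial>M) + (\<integral>x. indicator K x * (f' x - f p - lin x) \<partial>M)"
      unfolding DKKc using iKc iK2 iK3 by simp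
    then have "\<bar>(LINT x:D|lebd d. f x) - f p\<bar> \<le> 2 * measure M Kc + \<eta> + 4 * L * \<rho>^2"
      using intD I1 I2b I3 I3b by linarith
    then show "\<bar>(LINT x:D|lebd d. f x) - f p\<bar> \<le> 2 * measure (lebd d) {x\<in>D. \<rho> \<le> distd d x x0} + 4 * L * \<rho>^2 + \<eta>"
      by (simp add: M_def Kc_def)
  qed
qed



lemma const_in_C1L:
  assumes "0 < L0" "0 < L1" "\<bar>c\<bar> \<le> 1"
  shows "(\<lambda>_. c) \<in> C1L d D L0 L1"
proof -
  define g where "g = (\<lambda>x::nat\<Rightarrow>real. restrict (\<lambda>i. 0::real) {..<d})"
  have inn: "innerd d (g x) v = 0" for x v by (simp add: innerd_def g_def)
  have dg: "distd d (g x) (g y) = 0" for x y by (simp add: distd_def g_def)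
  have "is_grad_on d D (\<lambda>_. c) g"
    unfolding is_grad_on_def
  proof (intro ballI conjI allI impI)
    fix x :: "nat \<Rightarrow> real" show "g x \<in> Rd d" by (simp add: g_def restrict_in_Rd)
    fix e :: real assume "0 < e"
    then show "\<exists>\<delta>>0. \<forall>y\<in>D. distd d y x < \<delta> \<longrightarrow> \<bar>c - c - innerd d (g x) (\<lambda>i. y i - x i)\<bar> \<le> e * distd d y x"
      by (intro exI[of _ 1]) (auto simp: inn distd_nonneg)
  qed
  moreover have "cont_on_d d D g" unfolding cont_on_d_def by (auto simp: dg)
  moreover have "lip_grad_d d D g L1"
    unfolding lip_grad_d_def using assms by (auto simp: dg distd_nonneg)
  moreover have "lip_d d D (\<lambda>_. c) L0"
    unfolding lip_d_def using assms by (auto simp: distd_nonneg)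
  moreover have "sup_le1 D (\<lambda>_. c)" using assms by (simp add: sup_le1_def)
  ultimately show ?thesis unfolding C1L_def by blast
qed

lemma C1L_sub_F2: "C1L d D L0 L1 \<subseteq> F2 d D L1"
  unfolding C1L_def F2_def by blast

lemma achieves_mono: "achieves d D F n \<epsilon> \<Longrightarrow> F' \<subseteq> F \<Longrightarrow> achieves d D F' n \<epsilon>"
  unfolding achieves_def by blast

lemma not_achieves0:
  assumes "0 < L0" "0 < L1" "\<epsilon> < 1" and Dm: "D \<in> sets (lebd d)" and D1: "measure (lebd d) D = 1"
  shows "\<not> achieves d D (C1L d D L0 L1) 0 \<epsilon>"
proof
  assume "achieves d D (C1L d D L0 L1) 0 \<epsilon>"
  then obtain P \<phi> where H: "\<forall>f\<in>C1L d D L0 L1. \<bar>(LINT x:D|lebd d. f x) - \<phi> (info P f 0)\<bar> \<le> \<epsilon>"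
    unfolding achieves_def by blast
  have int: "(LINT x:D|lebd d. c) = c" for c :: real
    using Dm D1 by (simp add: set_lebesgue_integral_def sets.Int_space_eq2)
  have "\<bar>1 - \<phi> []\<bar> \<le> \<epsilon>" using H const_in_C1L[OF assms(1,2), of 1 d D] by (force simp: int)
  moreover have "\<bar>-1 - \<phi> []\<bar> \<le> \<epsilon>" using H const_in_C1L[OF assms(1,2), of "-1" d D] by (force simp: int)
  ultimately show False using assms(3) by linarith
qed

lemma achieves1:
  assumes "p \<in> D" "\<forall>f\<in>F. \<bar>(LINT x:D|lebd d. f x) - f p\<bar> \<le> \<epsilon>"
  shows "achieves d D F 1 \<epsilon>"
  unfolding achieves_def
  by (rule exI[of _ "\<lambda>k ys. p"], rule exI[of _ "\<lambda>ys. hd ys"]) (use assms in auto)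

lemma n_compl_1:
  assumes "achieves d D F 1 \<epsilon>" "\<not> achieves d D F 0 \<epsilon>"
  shows "n_compl d D F \<epsilon> = 1"
  unfolding n_compl_def
proof (rule Least_equality)
  show "achieves d D F 1 \<epsilon>" by (rule assms(1))
  fix m assume "achieves d D F m \<epsilon>" then show "1 \<le> m" using assms(2) by (cases m) auto
qed

theorem proposition4p5:
  fixes D :: "nat \<Rightarrow> (nat \<Rightarrow> real) set"
    and L0 L1 :: "nat \<Rightarrow> real"
  assumes "\<forall>d\<ge>1. convex_d d (D d)"
    and "property_P D"
    and "\<forall>d. L0 d > 0 \<and> L1 d > 0"
    and "(\<lambda>d. L1 d * real d) \<longlonglongrightarrow> 0"
  shows "\<forall>\<epsilon>::real. 0 < \<epsilon> \<and> \<epsilon> < 1 \<longrightarrow> (\<exists>d0. \<forall>d\<ge>d0.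
           n_compl d (D d) (C1L d (D d) (L0 d) (L1 d)) \<epsilon> = 1 \<and>
           n_compl d (D d) (F2 d (D d) (L1 d)) \<epsilon> = 1)"
proof (intro allI impI)
  fix \<epsilon> :: real assume \<epsilon>: "0 < \<epsilon> \<and> \<epsilon> < 1"
  have opD: "\<And>d. d \<ge> 1 \<Longrightarrow> open_d d (D d)" and em: "\<And>d. d \<ge> 1 \<Longrightarrow> emeasure (lebd d) (D d) = 1"
    using assms(2) unfolding property_P_def by auto
  obtain xs R where xs: "\<And>d. d \<ge> 1 \<Longrightarrow> xs d \<in> D d"
    and lim: "(\<lambda>d. measure (lebd d) {x \<in> D d. distd d x (xs d) \<ge> R * sqrt (real d)}) \<longlonglongrightarrow> 0"
    using assms(2) unfolding property_P_def by blast
  define bad where "bad d = measure (lebd d) {x \<in> D d. distd d x (xs d) \<ge> R * sqrt (real d)}" for d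
  have Dm: "D d \<in> sets (lebd d)" if "d \<ge> 1" for d
    using em[OF that] emeasure_notin_sets[of "D d" "lebd d"] by force
  have D1: "measure (lebd d) (D d) = 1" if "d \<ge> 1" for d
    using em[OF that] by (simp add: measure_def)
  have Dfin: "emeasure (lebd d) (D d) < \<infinity>" if "d \<ge> 1" for d using em[OF that] by simp
  have ev1: "eventually (\<lambda>d. bad d < \<epsilon> / 8) sequentially"
    using lim \<epsilon> unfolding bad_def by (intro order_tendstoD(2)) auto
  have Rpos: "R > 0"
  proof (rule ccontr)
    assume "\<not> R > 0"
    then have "bad d = 1" if "d \<ge> 1" for d
    proof -
      have "{x \<in> D d. distd d x (xs d) \<ge> R * sqrt (real d)} = D d"
        using \<open>\<not> R > 0\<close> distd_nonneg[of d _ "xs d"]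
        by (auto intro: order_trans[OF mult_nonpos_nonneg])
      then show ?thesis using D1[OF that] by (simp add: bad_def)
    qed
    moreover obtain N where "\<forall>d\<ge>N. bad d < \<epsilon> / 8" using ev1 unfolding eventually_sequentially by blast
    ultimately have "1 < \<epsilon> / 8" by (metis max.cobounded1 max.cobounded2 le_add2 add_0 one_add_one le_trans nat_le_linear)
    then show False using \<epsilon> by simp
  qed
  have ev2: "eventually (\<lambda>d. L1 d * real d < \<epsilon> / (16 * R^2)) sequentially"
    using assms(4) \<epsilon> Rpos by (intro order_tendstoD(2)) auto
  obtain d0 where d0: "\<And>d. d \<ge> d0 \<Longrightarrow> bad d < \<epsilon> / 8 \<and> L1 d * real d < \<epsilon> / (16 * R^2) \<and> d \<ge> 1"
    using eventually_conj[OF ev1 eventually_conj[OF ev2 eventually_ge_at_top[of 1]]]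
    unfolding eventually_sequentially by blast
  show "\<exists>d0. \<forall>d\<ge>d0. n_compl d (D d) (C1L d (D d) (L0 d) (L1 d)) \<epsilon> = 1 \<and>
           n_compl d (D d) (F2 d (D d) (L1 d)) \<epsilon> = 1"
  proof (intro exI[of _ d0] allI impI)
    fix d assume "d \<ge> d0"
    note dd = d0[OF this]
    have d1: "d \<ge> 1" using dd by simp
    have L0p: "0 < L0 d" and L1p: "0 < L1 d" using assms(3) by auto
    have \<rho>: "0 < R * sqrt (real d)" using Rpos d1 by simp
    have eqbad: "{x\<in>D d. R * sqrt (real d) \<le> distd d x (xs d)} = {x \<in> D d. distd d x (xs d) \<ge> R * sqrt (real d)}"
      by simp
    obtain p where pD: "p \<in> D d" and bnd: "\<forall>f\<in>F2 d (D d) (L1 d). \<bar>(LINT x:D d|lebd d. f x) - f p\<bar>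
          \<le> 2 * bad d + 4 * L1 d * (R * sqrt (real d))^2 + \<epsilon> / 2"
      using core[OF assms(1)[rule_format, OF d1] opD[OF d1] Dm[OF d1] D1[OF d1] Dfin[OF d1] xs[OF d1] \<rho> L1p,
          of "\<epsilon> / 2"] dd \<epsilon> unfolding bad_def by auto
    have "4 * L1 d * (R * sqrt (real d))^2 = 4 * R^2 * (L1 d * real d)"
      by (simp add: power_mult_distrib)
    also have "\<dots> \<le> 4 * R^2 * (\<epsilon> / (16 * R^2))"
      using dd Rpos by (intro mult_left_mono) auto
    also have "\<dots> = \<epsilon> / 4" using Rpos by (simp add: field_simps)
    finally have "4 * L1 d * (R * sqrt (real d))^2 \<le> \<epsilon> / 4" .
    then have bnd': "\<forall>f\<in>F2 d (D d) (L1 d). \<bar>(LINT x:D d|lebd d. f x) - f p\<bar> \<le> \<epsilon>"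
      using bnd dd by fastforce
    have aF: "achieves d (D d) (F2 d (D d) (L1 d)) 1 \<epsilon>" by (rule achieves1[OF pD bnd'])
    have aC: "achieves d (D d) (C1L d (D d) (L0 d) (L1 d)) 1 \<epsilon>" by (rule achieves_mono[OF aF C1L_sub_F2])
    have nC: "\<not> achieves d (D d) (C1L d (D d) (L0 d) (L1 d)) 0 \<epsilon>"
      by (rule not_achieves0[OF L0p L1p _ Dm[OF d1] D1[OF d1]]) (use \<epsilon> in simp)
    have nF: "\<not> achieves d (D d) (F2 d (D d) (L1 d)) 0 \<epsilon>"
      using nC achieves_mono[OF _ C1L_sub_F2] by blast
    show "n_compl d (D d) (C1L d (D d) (L0 d) (L1 d)) \<epsilon> = 1 \<and> n_compl d (D d) (F2 d (D d) (L1 d)) \<epsilon> = 1"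
      using n_compl_1[OF aC nC] n_compl_1[OF aF nF] by simp
  qed
qed

end
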